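(* Let $T^X$ and $T^Y$ be stable trees marked by finite sets $X$ and $Y$, and suppose $T^X$ is compatible with $T^Y$. If an internal vertex $v$ of $T^Y$ separates three vertices of $T^X$, then $v$ is a vertex of $T^X$.
   Context: A tree is a finite connected graph without cycles (vertex set $V$, edges $2$-element subsets of $V$); leaves are vertices of valence $1$, the others internal vertices ($IV$); the tree is stable if every internal vertex has valence at least $3$. A tree marked by a finite set $X$ is a tree whose set of leaves is $X$. In a tree $T$, a vertex $v$ separates vertices $v_1,v_2,v_3$ if $v_1,v_2,v_3$ lie in three distinct connected components of $T\setminus\{v\}$. A tree $T^X$ is compatible with a tree $T^Y$ if (1) $X\subseteq Y$ and $IV^X\subseteq IV^Y$ (so every vertex of $T^X$ is a vertex of $T^Y$), and (2) for all vertices $v,v_1,v_2,v_3$ of $T^X$, $v$ separates $v_1,v_2,v_3$ in $T^X$ if and only if $v$ separates $v_1,v_2,v_3$ in $T^Y$. *)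

theory Defs
  imports Main
begin

definition graph :: "'a set \<Rightarrow> 'a set set \<Rightarrow> bool" where
  "graph V E \<longleftrightarrow> finite V \<and> (\<forall>e\<in>E. e \<subseteq> V \<and> card e = 2)"

definition walk :: "'a set \<Rightarrow> 'a set set \<Rightarrow> 'a list \<Rightarrow> bool" where
  "walk V E p \<longleftrightarrow> p \<noteq> [] \<and> set p \<subseteq> V \<and>
     (\<forall>i. Suc i < length p \<longrightarrow> {p ! i, p ! Suc i} \<in> E)"

definition connected_in :: "'a set \<Rightarrow> 'a set set \<Rightarrow> 'a \<Rightarrow> 'a \<Rightarrow> bool" where
  "connected_in V E u w \<longleftrightarrow> (\<exists>p. walk V E p \<and> hd p = u \<and> last p = w)"

definition connected_graph :: "'a set \<Rightarrow> 'a set set \<Rightarrow> bool" where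
  "connected_graph V E \<longleftrightarrow> V \<noteq> {} \<and> (\<forall>u\<in>V. \<forall>w\<in>V. connected_in V E u w)"

definition has_cycle :: "'a set \<Rightarrow> 'a set set \<Rightarrow> bool" where
  "has_cycle V E \<longleftrightarrow> (\<exists>p. walk V E p \<and> distinct p \<and> length p \<ge> 3 \<and> {last p, hd p} \<in> E)"

definition tree :: "'a set \<Rightarrow> 'a set set \<Rightarrow> bool" where
  "tree V E \<longleftrightarrow> graph V E \<and> connected_graph V E \<and> \<not> has_cycle V E"

definition valence :: "'a set set \<Rightarrow> 'a \<Rightarrow> nat" where
  "valence E x = card {e\<in>E. x \<in> e}"

definition leaves :: "'a set \<Rightarrow> 'a set set \<Rightarrow> 'a set" where
  "leaves V E = {x\<in>V. valence E x = 1}"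

definition internal_vertices :: "'a set \<Rightarrow> 'a set set \<Rightarrow> 'a set" where
  "internal_vertices V E = V - leaves V E"

definition stable_tree :: "'a set \<Rightarrow> 'a set set \<Rightarrow> bool" where
  "stable_tree V E \<longleftrightarrow> tree V E \<and> (\<forall>x\<in>internal_vertices V E. valence E x \<ge> 3)"

definition marked_tree :: "'a set \<Rightarrow> 'a set \<Rightarrow> 'a set set \<Rightarrow> bool" where
  "marked_tree X V E \<longleftrightarrow> finite X \<and> tree V E \<and> leaves V E = X"

definition separates :: "'a set \<Rightarrow> 'a set set \<Rightarrow> 'a \<Rightarrow> 'a \<Rightarrow> 'a \<Rightarrow> 'a \<Rightarrow> bool" where
  "separates V E v v1 v2 v3 \<longleftrightarrow>
     (let V' = V - {v}; E' = {e\<in>E. v \<notin> e} in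
       v1 \<in> V' \<and> v2 \<in> V' \<and> v3 \<in> V' \<and>
       \<not> connected_in V' E' v1 v2 \<and> \<not> connected_in V' E' v1 v3 \<and>
       \<not> connected_in V' E' v2 v3)"

definition compatible ::
  "'a set \<Rightarrow> 'a set \<Rightarrow> 'a set set \<Rightarrow> 'a set \<Rightarrow> 'a set \<Rightarrow> 'a set set \<Rightarrow> bool" where
  "compatible X VX EdX Y VY EdY \<longleftrightarrow>
     X \<subseteq> Y \<and> internal_vertices VX EdX \<subseteq> internal_vertices VY EdY \<and>
     (\<forall>v\<in>VX. \<forall>v1\<in>VX. \<forall>v2\<in>VX. \<forall>v3\<in>VX.
        separates VX EdX v v1 v2 v3 \<longleftrightarrow> separates VY EdY v v1 v2 v3)"

end

theory Submission
  imports Defs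
begin


lemma walk_Nil[simp]: "\<not> walk V E []" by (simp add: walk_def)

lemma walk_single[simp]: "walk V E [x] \<longleftrightarrow> x \<in> V" by (simp add: walk_def)

lemma walkD: "walk V E p \<Longrightarrow> Suc i < length p \<Longrightarrow> {p!i, p!Suc i} \<in> E"
  unfolding walk_def by (elim conjE allE impE) assumption+

lemma walk_setD: "walk V E p \<Longrightarrow> set p \<subseteq> V"
  unfolding walk_def by (elim conjE)

lemma walkI: "p \<noteq> [] \<Longrightarrow> set p \<subseteq> V \<Longrightarrow> (\<And>i. Suc i < length p \<Longrightarrow> {p!i, p!Suc i} \<in> E) \<Longrightarrow> walk V E p"
  unfolding walk_def by (intro conjI allI impI)

lemma walk_Cons_Cons: "walk V E (x#y#xs) \<longleftrightarrow> x \<in> V \<and> {x,y} \<in> E \<and> walk V E (y#xs)"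
proof
  assume w: "walk V E (x#y#xs)"
  have "walk V E (y#xs)"
  proof (rule walkI)
    show "set (y#xs) \<subseteq> V" using walk_setD[OF w] by simp
    fix i assume "Suc i < length (y#xs)"
    then have "Suc (Suc i) < length (x#y#xs)" by simp
    from walkD[OF w this] show "{(y#xs) ! i, (y#xs) ! Suc i} \<in> E" by simp
  qed simp
  moreover have "{x,y} \<in> E" using walkD[OF w, of 0] by simp
  moreover have "x \<in> V" using walk_setD[OF w] by simp
  ultimately show "x \<in> V \<and> {x,y} \<in> E \<and> walk V E (y#xs)" by (intro conjI)
next
  assume h: "x \<in> V \<and> {x,y} \<in> E \<and> walk V E (y#xs)"
  show "walk V E (x#y#xs)"
  proof (rule walkI)
    show "set (x#y#xs) \<subseteq> V" using h walk_setD[of V E "y#xs"] by simp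
    fix i assume i: "Suc i < length (x#y#xs)"
    show "{(x#y#xs) ! i, (x#y#xs) ! Suc i} \<in> E"
    proof (cases i)
      case 0 then show ?thesis using h by simp
    next
      case (Suc j)
      then have "Suc j < length (y#xs)" using i by simp
      from walkD[OF _ this] h have "{(y#xs) ! j, (y#xs) ! Suc j} \<in> E" by blast
      then show ?thesis using Suc by simp
    qed
  qed simp
qed

lemma walk_append_iff:
  "xs \<noteq> [] \<Longrightarrow> ys \<noteq> [] \<Longrightarrow> walk V E (xs@ys) \<longleftrightarrow> walk V E xs \<and> walk V E ys \<and> {last xs, hd ys} \<in> E"
proof (induction xs)
  case Nil then show ?case by simp
next
  case (Cons x xs)
  show ?case
  proof (cases xs)
    case Nil
    then obtain y ys' where "ys = y#ys'" using Cons.prems by (cases ys) auto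
    then show ?thesis using Nil by (auto simp add: walk_Cons_Cons)
  next
    case (Cons x' xs')
    have ih: "walk V E (xs@ys) \<longleftrightarrow> walk V E xs \<and> walk V E ys \<and> {last xs, hd ys} \<in> E"
      using Cons.IH Cons.prems Cons by simp
    have e1: "(x#xs)@ys = x#x'#(xs'@ys)" using Cons by simp
    have e2: "xs@ys = x'#(xs'@ys)" using Cons by simp
    have "walk V E ((x#xs)@ys) \<longleftrightarrow> x \<in> V \<and> {x,x'} \<in> E \<and> walk V E (xs@ys)"
      unfolding e1 e2 by (rule walk_Cons_Cons)
    moreover have "walk V E (x#xs) \<longleftrightarrow> x \<in> V \<and> {x,x'} \<in> E \<and> walk V E xs"
      using Cons walk_Cons_Cons by metis
    moreover have "last (x#xs) = last xs" using Cons by simp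
    ultimately show ?thesis using ih by (simp only:) blast
  qed
qed

lemma walk_glue: assumes a: "walk V E (xs@[y])" "walk V E (y#zs)" shows "walk V E (xs@y#zs)"
proof (cases zs)
  case Nil then show ?thesis using a by simp
next
  case (Cons z zs')
  have "xs@y#zs = (xs@[y]) @ (z#zs')" using Cons by simp
  moreover have "walk V E (z#zs')" "{y,z} \<in> E" using a(2) Cons by (auto simp: walk_Cons_Cons)
  ultimately show ?thesis using a(1) walk_append_iff[of "xs@[y]" "z#zs'" V E] by simp
qed

lemma walk_rev: "walk V E p \<Longrightarrow> walk V E (rev p)"
proof (induction p)
  case Nil then show ?case by simp
next
  case (Cons x p)
  show ?case
  proof (cases p)
    case Nil then show ?thesis using Cons by simp
  next
    case (Cons y p')
    have w: "x \<in> V" "{x,y} \<in> E" "walk V E p" using Cons.prems Cons by (auto simp: walk_Cons_Cons)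
    have "walk V E (rev p)" using Cons.IH w by simp
    moreover have "last (rev p) = y" using Cons by (simp add: last_rev)
    ultimately show ?thesis using w walk_append_iff[of "rev p" "[x]" V E] Cons
      by (simp add: insert_commute)
  qed
qed

lemma walk_avoid: "walk V E p \<Longrightarrow> x \<notin> set p \<Longrightarrow> walk (V - {x}) {e\<in>E. x \<notin> e} p"
proof -
  assume w: "walk V E p" and x: "x \<notin> set p"
  show ?thesis
  proof (rule walkI)
    show "p \<noteq> []" using w by (cases p) auto
    show "set p \<subseteq> V - {x}" using walk_setD[OF w] x by blast
    fix i assume i: "Suc i < length p"
    then have "p ! i \<in> set p" "p ! Suc i \<in> set p" by (simp_all add: nth_mem)
    then show "{p ! i, p ! Suc i} \<in> {e\<in>E. x \<notin> e}" using walkD[OF w i] x by auto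
  qed
qed

lemma walk_mono: "walk V' E' p \<Longrightarrow> V' \<subseteq> V \<Longrightarrow> E' \<subseteq> E \<Longrightarrow> walk V E p"
proof -
  assume w: "walk V' E' p" and s: "V' \<subseteq> V" "E' \<subseteq> E"
  show ?thesis
  proof (rule walkI)
    show "p \<noteq> []" using w by (cases p) auto
    show "set p \<subseteq> V" using walk_setD[OF w] s by blast
    fix i assume i: "Suc i < length p"
    show "{p ! i, p ! Suc i} \<in> E" using walkD[OF w i] s by blast
  qed
qed

lemma walk_distinct:
  "walk V E p \<Longrightarrow> \<exists>q. walk V E q \<and> distinct q \<and> hd q = hd p \<and> last q = last p"
proof (induction "length p" arbitrary: p rule: less_induct)
  case less
  show ?case
  proof (cases "distinct p")
    case True then show ?thesis using less.prems by blast
  next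
    case False
    then obtain xs ys zs y where p: "p = xs @ [y] @ ys @ [y] @ zs" using not_distinct_decomp by blast
    have "walk V E (xs @ [y])"
      using less.prems walk_append_iff[of "xs @ [y]" "ys @ [y] @ zs" V E] p by simp
    moreover have "walk V E (y # zs)"
      using less.prems walk_append_iff[of "xs @ [y] @ ys" "[y] @ zs" V E] p by simp
    ultimately have w: "walk V E (xs @ y # zs)" by (rule walk_glue)
    have "length (xs @ y # zs) < length p" using p by simp
    from less.hyps[OF this w] obtain q where "walk V E q \<and> distinct q \<and> hd q = hd (xs @ y # zs) \<and> last q = last (xs @ y # zs)" by blast
    moreover have "hd (xs @ y # zs) = hd p" using p by (cases xs) auto
    moreover have "last (xs @ y # zs) = last p" using p by (cases zs) auto
    ultimately show ?thesis by metis
  qed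
qed

lemma conn_refl: "u \<in> V \<Longrightarrow> connected_in V E u u"
  unfolding connected_in_def by (rule exI[of _ "[u]"]) simp

lemma conn_in_V: "connected_in V E u w \<Longrightarrow> u \<in> V \<and> w \<in> V"
proof -
  assume "connected_in V E u w"
  then obtain p where p: "walk V E p" "hd p = u" "last p = w" unfolding connected_in_def by blast
  have "p \<noteq> []" using p by (cases p) auto
  then show ?thesis using p walk_setD[OF p(1)] hd_in_set last_in_set by blast
qed

lemma conn_sym: "connected_in V E u w \<Longrightarrow> connected_in V E w u"
proof -
  assume "connected_in V E u w"
  then obtain p where p: "walk V E p" "hd p = u" "last p = w" unfolding connected_in_def by blast
  have "p \<noteq> []" using p by auto
  then have "walk V E (rev p) \<and> hd (rev p) = w \<and> last (rev p) = u" using p walk_rev by (simp add: hd_rev last_rev)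
  then show ?thesis unfolding connected_in_def by blast
qed

lemma conn_trans: "connected_in V E u w \<Longrightarrow> connected_in V E w z \<Longrightarrow> connected_in V E u z"
proof -
  assume "connected_in V E u w" "connected_in V E w z"
  then obtain p q where p: "walk V E p" "hd p = u" "last p = w" and q: "walk V E q" "hd q = w" "last q = z"
    unfolding connected_in_def by blast
  obtain q' where q': "q = w # q'" using q by (cases q) (auto)
  obtain p' where p': "p = p' @ [w]" using p by (metis append_butlast_last_id walk_Nil)
  have "walk V E (p' @ w # q')" using walk_glue p p' q q' by simp
  moreover have "hd (p' @ w # q') = u" using p p' by (cases p') auto
  moreover have "last (p' @ w # q') = z" using q q' by (cases q') auto
  ultimately show ?thesis unfolding connected_in_def by blast
qed

lemma conn_distinct: "connected_in V E u w \<Longrightarrow> \<exists>p. walk V E p \<and> distinct p \<and> hd p = u \<and> last p = w"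
proof -
  assume "connected_in V E u w"
  then obtain p where p: "walk V E p" "hd p = u" "last p = w" unfolding connected_in_def by blast
  from walk_distinct[OF p(1)] p show ?thesis by auto
qed


definition Dir :: "'a set \<Rightarrow> 'a set set \<Rightarrow> 'a \<Rightarrow> 'a \<Rightarrow> 'a \<Rightarrow> bool" where
  "Dir V E m u n \<longleftrightarrow> {m,n} \<in> E \<and> connected_in (V - {m}) {e\<in>E. m \<notin> e} u n"

lemma edge_ne: "graph V E \<Longrightarrow> {a,b} \<in> E \<Longrightarrow> a \<noteq> b \<and> a \<in> V \<and> b \<in> V"
proof -
  assume g: "graph V E" and e: "{a,b} \<in> E"
  have "{a,b} \<subseteq> V" "card {a,b} = 2" using g e unfolding graph_def by blast+
  moreover have "a \<noteq> b"
  proof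
    assume "a = b" then have "card {a,b} = 1" by simp
    then show False using \<open>card {a,b} = 2\<close> by simp
  qed
  ultimately show ?thesis by simp
qed

lemma nbr_sep:
  assumes t: "tree V E" and ab: "{a,b} \<in> E" and ac: "{a,c} \<in> E" and bc: "b \<noteq> c"
  shows "\<not> connected_in (V - {a}) {e\<in>E. a \<notin> e} b c"
proof
  assume c0: "connected_in (V - {a}) {e\<in>E. a \<notin> e} b c"
  obtain p where p: "walk (V - {a}) {e\<in>E. a \<notin> e} p" "distinct p" "hd p = b" "last p = c"
    using conn_distinct[OF c0] by metis
  have g: "graph V E" using t unfolding tree_def by blast
  have wp: "walk V E p" by (rule walk_mono[OF p(1)]) auto
  have pne: "p \<noteq> []" using p(1) by (cases p) auto
  have aV: "a \<in> V" using edge_ne[OF g ab] by blast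
  have ap: "a \<notin> set p" using walk_setD[OF p(1)] by blast
  have "walk V E ([a] @ p)" using walk_append_iff[of "[a]" p V E] pne wp aV ab p(3) by simp
  moreover have "distinct (a#p)" using ap p(2) by simp
  moreover have "length p \<ge> 2"
  proof (cases p)
    case Nil then show ?thesis using pne by simp
  next
    case (Cons u p')
    then show ?thesis using p bc by (cases p') auto
  qed
  then have "length (a#p) \<ge> 3" by simp
  moreover have "{last (a#p), hd (a#p)} \<in> E" using pne p(4) ac by (simp add: insert_commute)
  ultimately have "has_cycle V E" unfolding has_cycle_def by (intro exI[of _ "a#p"]) simp
  then show False using t unfolding tree_def by blast
qed

lemma dir_nonconn:
  assumes t: "tree V E" and "Dir V E m a na" "Dir V E m b nb" "na \<noteq> nb"
  shows "\<not> connected_in (V - {m}) {e\<in>E. m \<notin> e} a b"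
proof
  assume c: "connected_in (V - {m}) {e\<in>E. m \<notin> e} a b"
  have d1: "connected_in (V - {m}) {e\<in>E. m \<notin> e} a na" and d2: "connected_in (V - {m}) {e\<in>E. m \<notin> e} b nb"
    and e1: "{m,na} \<in> E" and e2: "{m,nb} \<in> E" using assms(2,3) unfolding Dir_def by auto
  have "connected_in (V - {m}) {e\<in>E. m \<notin> e} na nb"
    by (rule conn_trans[OF conn_trans[OF conn_sym[OF d1] c] d2])
  then show False using nbr_sep[OF t e1 e2 assms(4)] by contradiction
qed

lemma sep3:
  assumes t: "tree V E" and d: "Dir V E m a na" "Dir V E m b nb" "Dir V E m c nc"
    and "na \<noteq> nb" "na \<noteq> nc" "nb \<noteq> nc"
  shows "separates V E m a b c"
proof -
  have "a \<in> V - {m}" "b \<in> V - {m}" "c \<in> V - {m}" using d conn_in_V unfolding Dir_def by fast+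
  then show ?thesis using dir_nonconn[OF t d(1,2) assms(5)] dir_nonconn[OF t d(1,3) assms(6)] dir_nonconn[OF t d(2,3) assms(7)]
    unfolding separates_def Let_def by simp
qed

lemma avoid_through:
  assumes c: "connected_in V E w a" and vw: "v \<noteq> w"
    and nc: "\<not> connected_in (V-{v}) {e\<in>E. v\<notin>e} w a"
  shows "connected_in (V-{w}) {e\<in>E. w\<notin>e} v a"
proof -
  obtain p where p: "walk V E p" "distinct p" "hd p = w" "last p = a" using conn_distinct[OF c] by metis
  have "v \<in> set p"
  proof (rule ccontr)
    assume vp: "v \<notin> set p"
    have "walk (V-{v}) {e\<in>E. v\<notin>e} p" by (rule walk_avoid[OF p(1) vp])
    then have "connected_in (V-{v}) {e\<in>E. v\<notin>e} w a" unfolding connected_in_def using p(3,4) by metis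
    then show False using nc by contradiction
  qed
  then obtain p1 p2 where pp: "p = p1 @ v # p2" using split_list by metis
  have p1ne: "p1 \<noteq> []" using pp p(3) vw by (cases p1) auto
  have wv: "walk V E (v # p2)" using walk_append_iff[of p1 "v#p2" V E] p1ne p(1) pp by simp
  have "w \<in> set p1" using p1ne pp p(3) by (cases p1) auto
  then have wn: "w \<notin> set (v#p2)" using p(2) pp by auto
  have "walk (V-{w}) {e\<in>E. w\<notin>e} (v#p2)" by (rule walk_avoid[OF wv wn])
  moreover have "last (v#p2) = a" using pp p(4) by (cases p2) auto
  ultimately show ?thesis unfolding connected_in_def by (metis list.sel(1))
qed

lemma core:
  assumes cg: "connected_graph V E" and "m \<in> V" "a \<in> V" "b \<in> V" "m \<noteq> v"
    and "\<not> connected_in (V-{v}) {e\<in>E. v\<notin>e} m a" "\<not> connected_in (V-{v}) {e\<in>E. v\<notin>e} m b"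
  shows "connected_in (V-{m}) {e\<in>E. m\<notin>e} a b"
proof -
  have all: "\<forall>u\<in>V. \<forall>w\<in>V. connected_in V E u w" using cg unfolding connected_graph_def by (elim conjE)
  have c1: "connected_in V E m a" using all assms(2,3) by simp
  have c2: "connected_in V E m b" using all assms(2,4) by simp
  have "connected_in (V-{m}) {e\<in>E. m\<notin>e} v a" by (rule avoid_through[OF c1 assms(5)[symmetric] assms(6)])
  moreover have "connected_in (V-{m}) {e\<in>E. m\<notin>e} v b" by (rule avoid_through[OF c2 assms(5)[symmetric] assms(7)])
  ultimately show ?thesis by (rule conn_trans[OF conn_sym])
qed

lemma nc_trans: "connected_in V E m a \<Longrightarrow> \<not> connected_in V E a b \<Longrightarrow> \<not> connected_in V E m b"
proof
  assume h1: "connected_in V E m a" and h2: "\<not> connected_in V E a b" and h3: "connected_in V E m b"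
  have "connected_in V E a b" by (rule conn_trans[OF conn_sym[OF h1] h3])
  then show False using h2 by contradiction
qed

lemma finalA:
  assumes cg: "connected_graph V E" and mV: "m \<in> V" and mv: "m \<noteq> v"
    and s1: "separates V E v a b c" and s2: "separates V E m a b c"
  shows False
proof -
  let ?C = "connected_in (V-{v}) {e\<in>E. v\<notin>e}"
  have V: "a \<in> V" "b \<in> V" "c \<in> V" using s1 unfolding separates_def Let_def by auto
  have n1: "\<not> ?C a b" "\<not> ?C a c" "\<not> ?C b c" using s1 unfolding separates_def Let_def by auto
  have n2: "\<not> connected_in (V-{m}) {e\<in>E. m\<notin>e} a b" "\<not> connected_in (V-{m}) {e\<in>E. m\<notin>e} a c"
    "\<not> connected_in (V-{m}) {e\<in>E. m\<notin>e} b c" using s2 unfolding separates_def Let_def by auto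
  show False
  proof (cases "?C m a")
    case True
    have "\<not> ?C m b" by (rule nc_trans[OF True n1(1)])
    moreover have "\<not> ?C m c" by (rule nc_trans[OF True n1(2)])
    ultimately show False using core[OF cg mV V(2) V(3) mv] n2(3) by simp
  next
    case False
    show False
    proof (cases "?C m b")
      case True
      have "\<not> ?C m c" by (rule nc_trans[OF True n1(3)])
      then show False using core[OF cg mV V(1) V(3) mv False] n2(2) by simp
    next
      case False2: False
      then show False using core[OF cg mV V(1) V(2) mv False False2] n2(1) by simp
    qed
  qed
qed

lemma finalB:
  assumes cg: "connected_graph V E" and mV: "m \<in> V" and mv: "m \<noteq> v"
    and s1: "separates V E v a b m" and s2: "separates V E m a b u"
  shows False
proof -
  let ?C = "connected_in (V-{v}) {e\<in>E. v\<notin>e}"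
  have V: "a \<in> V" "b \<in> V" using s1 unfolding separates_def Let_def by auto
  have n0: "\<not> ?C a m" "\<not> ?C b m" using s1 unfolding separates_def Let_def by auto
  have n1: "\<not> ?C m a" "\<not> ?C m b" using n0 conn_sym by metis+
  have n2: "\<not> connected_in (V-{m}) {e\<in>E. m\<notin>e} a b" using s2 unfolding separates_def Let_def by auto
  show False using core[OF cg mV V mv n1] n2 by simp
qed

lemma sep_rot: "separates V E v a b c \<Longrightarrow> separates V E v b c a"
  unfolding separates_def Let_def using conn_sym by metis

lemma sep_swap: "separates V E v a b c \<Longrightarrow> separates V E v a c b"
  unfolding separates_def Let_def using conn_sym by metis


lemma walk_conn: "walk V E p \<Longrightarrow> connected_in V E (hd p) (last p)"
  unfolding connected_in_def by (intro exI[of _ p]) simp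

lemma median:
  assumes t: "tree V E" and xV: "x \<in> V" and yV: "y \<in> V" and zV: "z \<in> V"
  shows "\<exists>m nx ny nz. m \<in> V \<and> (x = m \<or> Dir V E m x nx) \<and> (y = m \<or> Dir V E m y ny) \<and>
     (z = m \<or> Dir V E m z nz) \<and> (x \<noteq> m \<longrightarrow> y \<noteq> m \<longrightarrow> nx \<noteq> ny) \<and>
     (x \<noteq> m \<longrightarrow> z \<noteq> m \<longrightarrow> nx \<noteq> nz) \<and> (y \<noteq> m \<longrightarrow> z \<noteq> m \<longrightarrow> ny \<noteq> nz)"
proof -
  have all: "\<forall>u\<in>V. \<forall>w\<in>V. connected_in V E u w" using t unfolding tree_def connected_graph_def by (elim conjE)
  have cxy: "connected_in V E x y" using all xV yV by simp
  have czx: "connected_in V E z x" using all xV zV by simp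
  obtain p where p: "walk V E p" "distinct p" "hd p = x" "last p = y" using conn_distinct[OF cxy] by metis
  obtain q where q: "walk V E q" "hd q = z" "last q = x" using czx unfolding connected_in_def by metis
  have pne: "p \<noteq> []" using p(1) by (cases p) simp_all
  have qne: "q \<noteq> []" using q(1) by (cases q) simp_all
  define q1 where "q1 = takeWhile (\<lambda>u. u \<notin> set p) q"
  define r where "r = dropWhile (\<lambda>u. u \<notin> set p) q"
  have qr: "q = q1 @ r" by (simp add: q1_def r_def)
  have xp: "x \<in> set p" using pne p(3) by auto
  have xq: "x \<in> set q" using qne q(3) by auto
  have rne: "r \<noteq> []"
  proof
    assume "r = []"
    then have "\<forall>u\<in>set q. u \<notin> set p" unfolding r_def by simp
    then show False using xp xq by blast
  qed
  define m where "m = hd r"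
  have mp: "m \<in> set p" using hd_dropWhile[of "\<lambda>u. u \<notin> set p" q] rne unfolding m_def r_def by simp
  have q1p: "\<And>u. u \<in> set q1 \<Longrightarrow> u \<notin> set p" unfolding q1_def by (drule set_takeWhileD) simp
  obtain p1 p2 where pp: "p = p1 @ m # p2" using split_list[OF mp] by metis
  have mV: "m \<in> V" using walk_setD[OF p(1)] mp by blast
  have dp: "distinct p1" "distinct p2" "m \<notin> set p1" "m \<notin> set p2" "set p1 \<inter> set p2 = {}" using p(2) pp by auto
  have wmp2: "walk V E (m # p2)"
  proof (cases "p1 = []")
    case True then show ?thesis using p(1) pp by simp
  next
    case False then show ?thesis using walk_append_iff[of p1 "m#p2" V E] p(1) pp by simp
  qed
  have X: "x = m \<or> (p1 \<noteq> [] \<and> Dir V E m x (last p1))"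
  proof (cases "p1 = []")
    case True then show ?thesis using pp p(3) by simp
  next
    case False
    have w1: "walk V E p1" and e: "{last p1, m} \<in> E" using walk_append_iff[of p1 "m#p2" V E] False p(1) pp by simp_all
    have "walk (V - {m}) {e\<in>E. m \<notin> e} p1" by (rule walk_avoid[OF w1 dp(3)])
    moreover have "hd p1 = x" using False pp p(3) by simp
    ultimately have "connected_in (V - {m}) {e\<in>E. m \<notin> e} x (last p1)" using walk_conn by metis
    then show ?thesis using e False unfolding Dir_def by (simp add: insert_commute)
  qed
  have Y: "y = m \<or> (p2 \<noteq> [] \<and> Dir V E m y (hd p2))"
  proof (cases "p2 = []")
    case True then show ?thesis using pp p(4) by simp
  next
    case False
    have w2: "walk V E p2" and e: "{m, hd p2} \<in> E" using walk_append_iff[of "[m]" p2 V E] False wmp2 by simp_all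
    have "walk (V - {m}) {e\<in>E. m \<notin> e} p2" by (rule walk_avoid[OF w2 dp(4)])
    moreover have "last p2 = y" using False pp p(4) by simp
    ultimately have "connected_in (V - {m}) {e\<in>E. m \<notin> e} (hd p2) y" using walk_conn by metis
    then have "connected_in (V - {m}) {e\<in>E. m \<notin> e} y (hd p2)" by (rule conn_sym)
    then show ?thesis using e False unfolding Dir_def by simp
  qed
  have Z: "z = m \<or> (q1 \<noteq> [] \<and> Dir V E m z (last q1))"
  proof (cases "q1 = []")
    case True then show ?thesis using qr q(2) rne unfolding m_def by (cases r) auto
  next
    case False
    have w1: "walk V E q1" and e: "{last q1, hd r} \<in> E" using walk_append_iff[of q1 r V E] False rne q(1) qr by simp_all
    have "m \<notin> set q1" using q1p mp by blast
    then have "walk (V - {m}) {e\<in>E. m \<notin> e} q1" by (rule walk_avoid[OF w1])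
    moreover have "hd q1 = z" using False qr q(2) by simp
    ultimately have "connected_in (V - {m}) {e\<in>E. m \<notin> e} z (last q1)" using walk_conn by metis
    then show ?thesis using e False unfolding Dir_def m_def by (simp add: insert_commute)
  qed
  have d12: "last p1 \<noteq> hd p2" if "p1 \<noteq> []" "p2 \<noteq> []"
  proof -
    have "last p1 \<in> set p1" "hd p2 \<in> set p2" using that by simp_all
    then show ?thesis using dp(5) by (auto simp: disjoint_iff)
  qed
  have d13: "last p1 \<noteq> last q1" if "p1 \<noteq> []" "q1 \<noteq> []"
  proof -
    have "last p1 \<in> set p" using that pp by simp
    moreover have "last q1 \<notin> set p" by (rule q1p[OF last_in_set[OF that(2)]])
    ultimately show ?thesis by auto
  qed
  have d23: "hd p2 \<noteq> last q1" if "p2 \<noteq> []" "q1 \<noteq> []"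
  proof -
    have "hd p2 \<in> set p" using that pp by (cases p2) simp_all
    moreover have "last q1 \<notin> set p" by (rule q1p[OF last_in_set[OF that(2)]])
    ultimately show ?thesis by auto
  qed
  show ?thesis
    apply (rule exI[of _ m], rule exI[of _ "last p1"], rule exI[of _ "hd p2"], rule exI[of _ "last q1"])
    using mV X Y Z d12 d13 d23 by blast
qed

lemma third:
  assumes st: "stable_tree V E" and mV: "m \<in> V" and ea: "{m,a} \<in> E" and eb: "{m,b} \<in> E" and ab: "a \<noteq> b"
  shows "\<exists>u. {m,u} \<in> E \<and> u \<noteq> a \<and> u \<noteq> b \<and> u \<noteq> m"
proof -
  have t: "tree V E" using st unfolding stable_tree_def by simp
  have g: "graph V E" using t unfolding tree_def by simp
  have fin: "finite V" and Es: "\<forall>e\<in>E. e \<subseteq> V \<and> card e = 2" using g unfolding graph_def by auto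
  have "E \<subseteq> Pow V" using Es by blast
  moreover have "finite (Pow V)" using fin by simp
  ultimately have finE: "finite E" by (rule finite_subset)
  define S where "S = {e\<in>E. m \<in> e}"
  have finS: "finite S" unfolding S_def using finE by simp
  have am: "a \<noteq> m" and bm: "b \<noteq> m" using edge_ne[OF g ea] edge_ne[OF g eb] by auto
  have neq: "{m,a} \<noteq> {m,b}" using ab am bm by (auto simp: doubleton_eq_iff)
  have sub: "{{m,a},{m,b}} \<subseteq> S" unfolding S_def using ea eb by auto
  have "card {{m,a},{m,b}} = 2" using neq by simp
  then have c2: "card S \<ge> 2" using card_mono[OF finS sub] by simp
  then have "m \<notin> leaves V E" unfolding leaves_def valence_def S_def by simp
  then have "m \<in> internal_vertices V E" using mV unfolding internal_vertices_def by simp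
  then have c3: "card S \<ge> 3" using st unfolding stable_tree_def valence_def S_def by simp
  have "\<not> S \<subseteq> {{m,a},{m,b}}"
  proof
    assume "S \<subseteq> {{m,a},{m,b}}"
    then have "card S \<le> card {{m,a},{m,b}}" by (rule card_mono[rotated]) simp
    then show False using c3 \<open>card {{m,a},{m,b}} = 2\<close> by simp
  qed
  then obtain e where eS: "e \<in> S" and en: "e \<noteq> {m,a}" "e \<noteq> {m,b}" by blast
  have eE: "e \<in> E" and me: "m \<in> e" using eS unfolding S_def by auto
  then have "card e = 2" using Es by blast
  then obtain s w where sw: "e = {s,w}" "s \<noteq> w" unfolding card_2_iff by blast
  have "\<exists>u. e = {m,u} \<and> u \<noteq> m"
  proof (cases "m = s")
    case True then show ?thesis using sw by blast
  next
    case False then have "m = w" using me sw by simp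
    then show ?thesis using sw by (simp add: insert_commute) blast
  qed
  then obtain u where eu: "e = {m,u}" "u \<noteq> m" by blast
  show ?thesis using eu eE en by blast
qed


lemma compat_sep:
  assumes "compatible X VX EdX Y VY EdY" "m \<in> VX" "separates VX EdX m a b c"
  shows "separates VY EdY m a b c"
proof -
  have abc: "a \<in> VX" "b \<in> VX" "c \<in> VX" using assms(3) unfolding separates_def Let_def by auto
  have "\<forall>v\<in>VX. \<forall>v1\<in>VX. \<forall>v2\<in>VX. \<forall>v3\<in>VX.
        separates VX EdX v v1 v2 v3 \<longleftrightarrow> separates VY EdY v v1 v2 v3"
    using assms(1) unfolding compatible_def by (elim conjE)
  then show ?thesis using assms(2,3) abc by simp
qed

lemma sep_distinct: "separates V E v a b c \<Longrightarrow> a \<noteq> b \<and> a \<noteq> c \<and> b \<noteq> c"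
  unfolding separates_def Let_def using conn_refl by metis

lemma dir_self: "graph V E \<Longrightarrow> {m,u} \<in> E \<Longrightarrow> Dir V E m u u"
  unfolding Dir_def using edge_ne conn_refl by (metis Diff_iff singletonD)

lemma degen:
  assumes st: "stable_tree V E" and mV: "m \<in> V" and da: "Dir V E m a na" and db: "Dir V E m b nb" and ab: "na \<noteq> nb"
  shows "\<exists>u. separates V E m a b u"
proof -
  have t: "tree V E" using st unfolding stable_tree_def by simp
  have g: "graph V E" using t unfolding tree_def by simp
  obtain u where u: "{m,u} \<in> E" "u \<noteq> na" "u \<noteq> nb" "u \<noteq> m"
    using third[OF st mV _ _ ab] da db unfolding Dir_def by blast
  have "Dir V E m u u" by (rule dir_self[OF g u(1)])
  then have "separates V E m a b u" using sep3[OF t da db _ ab] u(2,3) by metis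
  then show ?thesis by blast
qed

theorem lemma3p4:
  fixes X Y VX VY :: "'a set" and EdX EdY :: "'a set set"
  assumes "marked_tree X VX EdX" and "stable_tree VX EdX"
    and "marked_tree Y VY EdY" and "stable_tree VY EdY"
    and "compatible X VX EdX Y VY EdY"
    and "v \<in> internal_vertices VY EdY"
    and "v1 \<in> VX" and "v2 \<in> VX" and "v3 \<in> VX"
    and "separates VY EdY v v1 v2 v3"
  shows "v \<in> VX"
proof (rule ccontr)
  assume nv: "v \<notin> VX"
  have tX: "tree VX EdX" using assms(2) unfolding stable_tree_def by simp
  have tY: "tree VY EdY" using assms(4) unfolding stable_tree_def by simp
  have cgY: "connected_graph VY EdY" using tY unfolding tree_def by simp
  have lX: "leaves VX EdX = X" and lY: "leaves VY EdY = Y" using assms(1,3) unfolding marked_tree_def by auto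
  have XY: "X \<subseteq> Y" and IXY: "internal_vertices VX EdX \<subseteq> internal_vertices VY EdY"
    using assms(5) unfolding compatible_def by auto
  have sub: "VX \<subseteq> VY"
  proof
    fix w assume w: "w \<in> VX"
    show "w \<in> VY"
    proof (cases "w \<in> leaves VX EdX")
      case True then have "w \<in> leaves VY EdY" using lX lY XY by blast
      then show ?thesis unfolding leaves_def by simp
    next
      case False then have "w \<in> internal_vertices VY EdY" using IXY w unfolding internal_vertices_def by blast
      then show ?thesis unfolding internal_vertices_def by simp
    qed
  qed
  have sY: "separates VY EdY v v1 v2 v3" by (rule assms(10))
  have dist: "v1 \<noteq> v2" "v1 \<noteq> v3" "v2 \<noteq> v3" using sep_distinct[OF sY] by auto
  obtain m nx ny nz where med: "m \<in> VX" "v1 = m \<or> Dir VX EdX m v1 nx" "v2 = m \<or> Dir VX EdX m v2 ny"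
     "v3 = m \<or> Dir VX EdX m v3 nz" "v1 \<noteq> m \<longrightarrow> v2 \<noteq> m \<longrightarrow> nx \<noteq> ny"
     "v1 \<noteq> m \<longrightarrow> v3 \<noteq> m \<longrightarrow> nx \<noteq> nz" "v2 \<noteq> m \<longrightarrow> v3 \<noteq> m \<longrightarrow> ny \<noteq> nz"
    using median[OF tX assms(7,8,9)] by blast
  have mY: "m \<in> VY" using sub med(1) by blast
  have mv: "m \<noteq> v" using nv med(1) by blast
  show False
  proof (cases "v1 = m")
    case True
    then have n2: "v2 \<noteq> m" "v3 \<noteq> m" using dist by auto
    obtain u where "separates VX EdX m v2 v3 u"
      using degen[OF assms(2) med(1)] med(3,4,7) n2 by blast
    then have s: "separates VY EdY m v2 v3 u" by (rule compat_sep[OF assms(5) med(1)])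
    have "separates VY EdY v v2 v3 v1" by (rule sep_rot[OF sY])
    then show False using finalB[OF cgY mY mv _ s] True by simp
  next
    case F1: False
    show False
    proof (cases "v2 = m")
      case True
      then have n2: "v3 \<noteq> m" using dist by auto
      obtain u where "separates VX EdX m v1 v3 u"
        using degen[OF assms(2) med(1)] med(2,4,6) n2 F1 by blast
      then have s: "separates VY EdY m v1 v3 u" by (rule compat_sep[OF assms(5) med(1)])
      have "separates VY EdY v v1 v3 v2" by (rule sep_swap[OF sY])
      then show False using finalB[OF cgY mY mv _ s] True by simp
    next
      case F2: False
      show False
      proof (cases "v3 = m")
        case True
        obtain u where "separates VX EdX m v1 v2 u"
          using degen[OF assms(2) med(1)] med(2,3,5) F1 F2 by blast
        then have s: "separates VY EdY m v1 v2 u" by (rule compat_sep[OF assms(5) med(1)])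
        show False using finalB[OF cgY mY mv _ s] sY True by simp
      next
        case F3: False
        have "separates VX EdX m v1 v2 v3"
          using sep3[OF tX] med F1 F2 F3 by blast
        then have s: "separates VY EdY m v1 v2 v3" by (rule compat_sep[OF assms(5) med(1)])
        show False by (rule finalA[OF cgY mY mv sY s])
      qed
    qed
  qed
qed

end
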